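(* Let $(A,f)$ be a finite-dimensional quadratic Lie algebra over a field $\mathbb{K}$ of characteristic zero, let $d$ be an $f$-skew-symmetric derivation of $A$, and let $(A_b,f_b)$ be the one-dimensional double extension of $(A,f)$ by $(b,d)$. Then $A_b$ is $2$-step nilpotent if and only if $0\neq \mathrm{im}\,d+A^2\subseteq Z(A)\cap\ker d$.
   Context: A quadratic Lie algebra $(A,f)$ is a Lie algebra with a non-degenerate symmetric bilinear form $f$ satisfying $f([x,y],z)+f(y,[x,z])=0$. A derivation $d$ is $f$-skew-symmetric if $f(d(x),y)+f(x,d(y))=0$. The one-dimensional double extension of $(A,f)$ by $(b,d)$ is $A_b=\mathbb{K}b\oplus A\oplus\mathbb{K}\beta$ with bracket $[\lambda b+a+\mu\beta,\lambda' b+a'+\mu'\beta]=\lambda d(a')-\lambda' d(a)+[a,a']_A+f(d(a),a')\beta$ and form $f_b(\lambda b+a+\mu\beta,\lambda' b+a'+\mu'\beta)=\lambda\mu'+\lambda'\mu+f(a,a')$. A Lie algebra $L$ is $2$-step nilpotent if $[L,[L,L]]=0$ and $[L,L]\neq 0$. *)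

theory Defs
  imports Complex_Main "HOL-Library.Product_Plus"
begin

definition fin_dim_vs :: "('k::field \<Rightarrow> 'a::ab_group_add \<Rightarrow> 'a) \<Rightarrow> bool" where
  "fin_dim_vs scale \<longleftrightarrow> (\<exists>B::'a set. finite_dimensional_vector_space scale B)"

definition bilinear_map :: "('k::field \<Rightarrow> 'a::ab_group_add \<Rightarrow> 'a) \<Rightarrow> ('k \<Rightarrow> 'c::ab_group_add \<Rightarrow> 'c)
    \<Rightarrow> ('a \<Rightarrow> 'a \<Rightarrow> 'c) \<Rightarrow> bool" where
  "bilinear_map scale scale2 g \<longleftrightarrow>
     (\<forall>x. Vector_Spaces.linear scale scale2 (g x)) \<and> (\<forall>y. Vector_Spaces.linear scale scale2 (\<lambda>x. g x y))"

definition lie_algebra :: "('k::field \<Rightarrow> 'a::ab_group_add \<Rightarrow> 'a) \<Rightarrow> ('a \<Rightarrow> 'a \<Rightarrow> 'a) \<Rightarrow> bool" where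
  "lie_algebra scale br \<longleftrightarrow> vector_space scale \<and> bilinear_map scale scale br \<and>
     (\<forall>x. br x x = 0) \<and>
     (\<forall>x y z. br x (br y z) + br y (br z x) + br z (br x y) = 0)"

definition quadratic_lie_algebra ::
  "('k::field \<Rightarrow> 'a::ab_group_add \<Rightarrow> 'a) \<Rightarrow> ('a \<Rightarrow> 'a \<Rightarrow> 'a) \<Rightarrow> ('a \<Rightarrow> 'a \<Rightarrow> 'k) \<Rightarrow> bool" where
  "quadratic_lie_algebra scale br f \<longleftrightarrow> lie_algebra scale br \<and>
     bilinear_map scale (*) f \<and> (\<forall>x y. f x y = f y x) \<and>
     (\<forall>x. (\<forall>y. f x y = 0) \<longrightarrow> x = 0) \<and>
     (\<forall>x y z. f (br x y) z + f y (br x z) = 0)"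

definition derivation :: "('k::field \<Rightarrow> 'a::ab_group_add \<Rightarrow> 'a) \<Rightarrow> ('a \<Rightarrow> 'a \<Rightarrow> 'a) \<Rightarrow> ('a \<Rightarrow> 'a) \<Rightarrow> bool" where
  "derivation scale br d \<longleftrightarrow> Vector_Spaces.linear scale scale d \<and>
     (\<forall>x y. d (br x y) = br (d x) y + br x (d y))"

definition skew_symmetric :: "('a \<Rightarrow> 'a \<Rightarrow> 'k::field) \<Rightarrow> ('a \<Rightarrow> 'a) \<Rightarrow> bool" where
  "skew_symmetric f d \<longleftrightarrow> (\<forall>x y. f (d x) y + f x (d y) = 0)"

text \<open>The one-dimensional double extension A_b = K b + A + K beta, elements written as
  triples (lambda, a, mu) meaning lambda b + a + mu beta.\<close>
definition dext_scale :: "('k::field \<Rightarrow> 'a::ab_group_add \<Rightarrow> 'a) \<Rightarrow> 'k \<Rightarrow> 'k \<times> 'a \<times> 'k \<Rightarrow> 'k \<times> 'a \<times> 'k" where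
  "dext_scale scale c = (\<lambda>(l, a, m). (c * l, scale c a, c * m))"

definition dext_bracket ::
  "('k::field \<Rightarrow> 'a::ab_group_add \<Rightarrow> 'a) \<Rightarrow> ('a \<Rightarrow> 'a \<Rightarrow> 'a) \<Rightarrow> ('a \<Rightarrow> 'a \<Rightarrow> 'k) \<Rightarrow> ('a \<Rightarrow> 'a)
     \<Rightarrow> 'k \<times> 'a \<times> 'k \<Rightarrow> 'k \<times> 'a \<times> 'k \<Rightarrow> 'k \<times> 'a \<times> 'k" where
  "dext_bracket scale br f d = (\<lambda>(l, a, m) (l', a', m').
     (0, scale l (d a') - scale l' (d a) + br a a', f (d a) a'))"

definition dext_form :: "('a \<Rightarrow> 'a \<Rightarrow> 'k::field) \<Rightarrow> 'k \<times> 'a \<times> 'k \<Rightarrow> 'k \<times> 'a \<times> 'k \<Rightarrow> 'k" where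
  "dext_form f = (\<lambda>(l, a, m) (l', a', m'). l * m' + l' * m + f a a')"

definition two_step_nilpotent :: "('b \<Rightarrow> 'b \<Rightarrow> 'b::zero) \<Rightarrow> bool" where
  "two_step_nilpotent br \<longleftrightarrow> (\<forall>x y z. br x (br y z) = 0) \<and> (\<exists>x y. br x y \<noteq> 0)"

definition derived_algebra :: "('k::field \<Rightarrow> 'a::ab_group_add \<Rightarrow> 'a) \<Rightarrow> ('a \<Rightarrow> 'a \<Rightarrow> 'a) \<Rightarrow> 'a set" where
  "derived_algebra scale br = module.span scale {br x y | x y. True}"

definition lie_center :: "('a \<Rightarrow> 'a \<Rightarrow> 'a::zero) \<Rightarrow> 'a set" where
  "lie_center br = {z. \<forall>x. br z x = 0}"

definition subspace_sum :: "'a::plus set \<Rightarrow> 'a set \<Rightarrow> 'a set" where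
  "subspace_sum U V = {u + v | u v. u \<in> U \<and> v \<in> V}"

end

theory Submission
  imports Defs
begin

theorem proposition2p10:
  fixes scale :: "'k::field_char_0 \<Rightarrow> 'a::ab_group_add \<Rightarrow> 'a"
    and br :: "'a \<Rightarrow> 'a \<Rightarrow> 'a"
    and f :: "'a \<Rightarrow> 'a \<Rightarrow> 'k"
    and d :: "'a \<Rightarrow> 'a"
  assumes "fin_dim_vs scale"
    and "quadratic_lie_algebra scale br f"
    and "derivation scale br d"
    and "skew_symmetric f d"
  shows "two_step_nilpotent (dext_bracket scale br f d) \<longleftrightarrow>
    (subspace_sum (range d) (derived_algebra scale br) \<noteq> {0} \<and>
     subspace_sum (range d) (derived_algebra scale br) \<subseteq> lie_center br \<inter> {x. d x = 0})"
proof -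
  have LA: "lie_algebra scale br" and BF: "bilinear_map scale (*) f"
    using assms(2) unfolding quadratic_lie_algebra_def by auto
  have VS: "vector_space scale" using LA unfolding lie_algebra_def by auto
  interpret vector_space scale by (rule VS)
  have BB: "bilinear_map scale scale br" and alt: "\<And>x. br x x = 0"
    using LA unfolding lie_algebra_def by auto
  have dlin: "Vector_Spaces.linear scale scale d" using assms(3) unfolding derivation_def by auto
  have dadd: "\<And>x y. d (x + y) = d x + d y" and dsc: "\<And>c x. d (scale c x) = scale c (d x)"
    using dlin unfolding Vector_Spaces.linear_iff by auto
  have d0: "d 0 = 0" using dadd[of 0 0] by simp
  have ddiff: "d (x - y) = d x - d y" for x y
    using dadd[of "x - y" y] by (simp add: eq_diff_eq)
  have br2add: "\<And>x y z. br x (y + z) = br x y + br x z"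
    and br2sc: "\<And>x c y. br x (scale c y) = scale c (br x y)"
    and br1add: "\<And>x y z. br (y + z) x = br y x + br z x"
    and br1sc: "\<And>x c y. br (scale c y) x = scale c (br y x)"
    using BB unfolding bilinear_map_def Vector_Spaces.linear_iff by auto
  have br20: "\<And>x. br x 0 = 0" using br2add[of _ 0 0] by simp
  have br10: "br 0 x = 0" for x using br1add[of 0 0 x] by simp
  have anti: "\<And>a b. br a b = - br b a"
  proof -
    fix a b
    have "0 = br (a + b) (a + b)" using alt by simp
    also have "\<dots> = br a b + br b a" using br1add[of a b "a+b"] br2add[of a a b] br2add[of b a b] alt[of a] alt[of b] by simp
    finally show "br a b = - br b a" by (simp add: eq_neg_iff_add_eq_0)
  qed
  have f1add: "\<And>x y z. f (y + z) x = f y x + f z x"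
    using BF unfolding bilinear_map_def Vector_Spaces.linear_iff by auto
  have f2add: "\<And>x y z. f x (y + z) = f x y + f x z"
    using BF unfolding bilinear_map_def Vector_Spaces.linear_iff by auto
  have f10: "f 0 x = 0" for x using f1add[of 0 0 x] by simp
  have f20: "\<And>x. f x 0 = 0" using f2add[of _ 0 0] by simp
  have skew: "\<And>x y. f (d x) y + f x (d y) = 0" using assms(4) unfolding skew_symmetric_def by auto
  have brk: "\<And>l a m l' a' m'. dext_bracket scale br f d (l, a, m) (l', a', m') =
      (0, scale l (d a') - scale l' (d a) + br a a', f (d a) a')"
    by (simp add: dext_bracket_def)
  define K where "K = lie_center br \<inter> {x. d x = 0}"
  define S where "S = subspace_sum (range d) (derived_algebra scale br)"
  define Br where "Br = {br x y | x y. True}"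
  have DA: "derived_algebra scale br = span Br" unfolding derived_algebra_def Br_def by simp
  have subK: "subspace K"
    unfolding subspace_def K_def lie_center_def
    by (auto simp: br10 d0 br1add dadd br1sc dsc)
  have Kbr: "br x w = 0 \<and> d w = 0" if "w \<in> K" for w x
  proof -
    have "br w x = 0" "d w = 0" using that unfolding K_def lie_center_def by auto
    moreover have "br x w = - br w x" by (rule anti)
    ultimately show ?thesis by simp
  qed
  have wS: "\<And>l y l' z. scale l (d z) - scale l' (d y) + br y z \<in> S"
  proof -
    fix l y l' z
    have "scale l (d z) - scale l' (d y) = d (scale l z - scale l' y)"
      by (simp add: ddiff dsc)
    moreover have "br y z \<in> span Br" by (rule span_base) (auto simp: Br_def)
    ultimately show "scale l (d z) - scale l' (d y) + br y z \<in> S"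
      unfolding S_def subspace_sum_def DA by auto
  qed
  have S0: "0 \<in> S" using wS[of 0 0 0 0] br10 by simp
  show ?thesis
    unfolding S_def[symmetric] K_def[symmetric] two_step_nilpotent_def
  proof
    assume N: "(\<forall>x y z. dext_bracket scale br f d x (dext_bracket scale br f d y z) = 0) \<and>
      (\<exists>x y. dext_bracket scale br f d x y \<noteq> 0)"
    have wK: "scale l (d z) - scale l' (d y) + br y z \<in> K" for l y l' z
    proof -
      define w where "w = scale l (d z) - scale l' (d y) + br y z"
      have c1: "br x w = 0" for x
        using N[THEN conjunct1, rule_format, of "(0,x,0)" "(l,y,0)" "(l',z,0)"]
        by (simp add: brk w_def zero_prod_def)
      have c2: "d w = 0"
        using N[THEN conjunct1, rule_format, of "(1,0,0)" "(l,y,0)" "(l',z,0)"]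
        by (simp add: brk w_def d0 br10 zero_prod_def)
      show ?thesis unfolding w_def[symmetric] K_def
        proof -
        have "br w x = 0" for x using anti[of w x] c1[of x] by simp
        then show "w \<in> lie_center br \<inter> {x. d x = 0}" using c2 by (simp add: lie_center_def)
      qed
    qed
    have "span Br \<subseteq> K"
    proof (rule span_minimal[OF _ subK])
      show "Br \<subseteq> K"
      proof
        fix v assume "v \<in> Br"
        then obtain y z where "v = br y z" by (auto simp: Br_def)
        then show "v \<in> K" using wK[of 0 z 0 y] by simp
      qed
    qed
    moreover have "d z \<in> K" for z using wK[of 1 z 0 0] by (simp add: br10)
    ultimately have SK: "S \<subseteq> K"
    proof -
      assume sp: "span Br \<subseteq> K" and dK: "\<And>z. d z \<in> K"
      show "S \<subseteq> K"
      proof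
        fix v assume "v \<in> S"
        then obtain u s where "v = u + s" "u \<in> range d" "s \<in> span Br"
          unfolding S_def subspace_sum_def DA by auto
        then show "v \<in> K" using sp dK subK[unfolded subspace_def] by blast
      qed
    qed
    obtain X Y where XY: "dext_bracket scale br f d X Y \<noteq> 0" using N by auto
    obtain l y m where X: "X = (l, y, m)" by (cases X) auto
    obtain l' z m' where Y: "Y = (l', z, m')" by (cases Y) auto
    have "S \<noteq> {0}"
    proof (cases "scale l (d z) - scale l' (d y) + br y z = 0")
      case True
      then have "f (d y) z \<noteq> 0" using XY by (simp add: X Y brk zero_prod_def)
      then have "d y \<noteq> 0" using f10 by auto
      moreover have "d y \<in> S" using wS[of 1 y 0 0] by (simp add: br10 d0)
      ultimately show ?thesis by auto
    next
      case False
      then show ?thesis using wS[of l z l' y] by auto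
    qed
    then show "S \<noteq> {0} \<and> S \<subseteq> K" using SK by auto
  next
    assume A: "S \<noteq> {0} \<and> S \<subseteq> K"
    have P1: "dext_bracket scale br f d x (dext_bracket scale br f d y z) = 0" for x y z
    proof -
      obtain l1 a1 m1 where x: "x = (l1, a1, m1)" by (cases x) auto
      obtain l2 a2 m2 where y: "y = (l2, a2, m2)" by (cases y) auto
      obtain l3 a3 m3 where z: "z = (l3, a3, m3)" by (cases z) auto
      define w where "w = scale l2 (d a3) - scale l3 (d a2) + br a2 a3"
      have "w \<in> K" using A wS[of l2 a3 l3 a2] unfolding w_def by blast
      then have "br a1 w = 0" "d w = 0" using Kbr by auto
      moreover have "f (d a1) w = 0" using skew[of a1 w] \<open>d w = 0\<close> f20 by simp
      ultimately show ?thesis by (simp add: x y z brk w_def[symmetric] zero_prod_def)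
    qed
    have P2: "\<exists>x y. dext_bracket scale br f d x y \<noteq> 0"
    proof (rule ccontr)
      assume "\<not> ?thesis"
      then have Z: "\<And>x y. dext_bracket scale br f d x y = 0" by auto
      have dz: "d z = 0" for z using Z[of "(1,0,0)" "(0,z,0)"] by (simp add: brk d0 br10 zero_prod_def)
      have bz: "br y z = 0" for y z using Z[of "(0,y,0)" "(0,z,0)"] by (simp add: brk zero_prod_def)
      have "span Br \<subseteq> {0}" by (rule span_minimal) (auto simp: Br_def bz)
      then have "S \<subseteq> {0}" unfolding S_def subspace_sum_def DA using dz by auto
      then show False using A S0 by auto
    qed
    show "(\<forall>x y z. dext_bracket scale br f d x (dext_bracket scale br f d y z) = 0) \<and>
      (\<exists>x y. dext_bracket scale br f d x y \<noteq> 0)" using P1 P2 by auto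
  qed
qed

end
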